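(* Let $\mathcal V$ be a vector space partition of $\mathbb F_2^8$ such that $\dim(V)$ is even for all $V\in\mathcal V$. Then $\mathcal V$ has one of the types $[8^1]$, $[2^{64},6^1]$, or $[2^{5i},4^{17-i}]$ for some $0\le i\le17$. Moreover, vector space partitions of $\mathbb F_2^8$ of each of these types exist.
   Context: A vector space partition of $\mathbb F_2^n$ is a set of nonzero subspaces such that every nonzero vector lies in exactly one of them. It has type $[d_1^{n_1},\dots,d_k^{n_k}]$ (with $d_1<\dots<d_k$) if it contains exactly $n_i$ subspaces of dimension $d_i$ and no others. *)

theory Defs
  imports "HOL-Analysis.Analysis" "HOL-Library.Z2"
begin

type_synonym F28 = "bit ^ 8"

definition vector_space_partition :: "F28 set set \<Rightarrow> bool" where
  "vector_space_partition P \<longleftrightarrow>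
     (\<forall>V\<in>P. vec.subspace V \<and> V \<noteq> {0}) \<and>
     (\<forall>v::F28. v \<noteq> 0 \<longrightarrow> (\<exists>!V. V \<in> P \<and> v \<in> V))"

definition num_dim :: "F28 set set \<Rightarrow> nat \<Rightarrow> nat" where
  "num_dim P d = card {V \<in> P. vec.dim V = d}"

text \<open>P has type [d_1^{n_1},...,d_k^{n_k}] iff num_dim P = t, where t d = n_i for d = d_i
and t d = 0 otherwise (members with n_i = 0 are simply absent).\<close>
definition has_type :: "F28 set set \<Rightarrow> (nat \<Rightarrow> nat) \<Rightarrow> bool" where
  "has_type P t \<longleftrightarrow> (\<forall>d. num_dim P d = t d)"

definition type_8 :: "nat \<Rightarrow> nat" where
  "type_8 d = (if d = 8 then 1 else 0)"

definition type_2_64_6_1 :: "nat \<Rightarrow> nat" where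
  "type_2_64_6_1 d = (if d = 2 then 64 else if d = 6 then 1 else 0)"

definition type_2_4 :: "nat \<Rightarrow> nat \<Rightarrow> nat" where
  "type_2_4 i d = (if d = 2 then 5 * i else if d = 4 then 17 - i else 0)"

end

theory Submission
  imports Defs
begin


fun colmap :: "nat list \<Rightarrow> nat \<Rightarrow> nat" where
  "colmap [] y = 0"
| "colmap (c # cs) y = xor (if odd y then c else 0) (colmap cs (y div 2))"

definition lin :: "(nat \<Rightarrow> nat) \<Rightarrow> bool" where
  "lin f \<longleftrightarrow> (\<forall>a b. f (xor a b) = xor (f a) (f b))"

lemma xor_lt_pow: "(x::nat) < 2^n \<Longrightarrow> y < 2^n \<Longrightarrow> xor x y < 2^n"
  by (metis take_bit_nat_eq_self_iff take_bit_xor)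

lemma xor_eq0: "xor (x::nat) y = 0 \<Longrightarrow> x = y"
  by (metis xor.assoc xor.right_neutral xor_self_eq)

lemma xor_cancel_left: "xor a (xor a b) = (b::nat)"
  by (metis xor.assoc xor_self_eq xor.left_neutral)

lemma xor_div2: "xor (x::nat) y div 2 = xor (x div 2) (y div 2)"
  using drop_bit_xor[of 1 x y] by (simp add: drop_bit_eq_div)

lemma colmap_xor: "colmap cs (xor x y) = xor (colmap cs x) (colmap cs y)"
proof (induction cs arbitrary: x y)
  case Nil
  then show ?case by simp
next
  case (Cons c cs)
  show ?case
    by (cases "odd x"; cases "odd y")
      (simp_all add: even_xor_iff xor_div2 Cons.IH ac_simps xor.left_commute xor_cancel_left)
qed

lemma lin_colmap: "lin (colmap cs)"
  unfolding lin_def using colmap_xor by blast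

lemma lin_0: "lin f \<Longrightarrow> f 0 = 0"
  unfolding lin_def by (metis xor_self_eq)

lemma lin_funpow: "lin f \<Longrightarrow> lin (f ^^ k)"
  by (induction k) (auto simp: lin_def)

lemma lin_comp_colmap: "lin f \<Longrightarrow> f (colmap cs y) = colmap (map f cs) y"
proof (induction cs arbitrary: y)
  case Nil
  then show ?case by (simp add: lin_0)
next
  case (Cons c cs)
  then show ?case
    by (cases "odd y") (auto simp: lin_def lin_0)
qed

lemma colmap_bound: "\<forall>c\<in>set cs. c < 2^n \<Longrightarrow> colmap cs y < (2::nat)^n"
proof (induction cs arbitrary: y)
  case Nil
  then show ?case by simp
next
  case (Cons c cs)
  then show ?case by (auto intro!: xor_lt_pow)
qed

definition step :: "nat \<Rightarrow> nat" where
  "step = colmap [2,4,8,16,32,64,128,29]"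

definition pw :: "nat \<Rightarrow> nat" where
  "pw k = (step ^^ k) 1"

lemma pw_Suc: "pw (Suc k) = step (pw k)"
  by (simp add: pw_def)

lemma pw_0: "pw 0 = 1" by (simp add: pw_def)


lemma pw_1s: "pw (Suc 0) = 2" by (simp add: pw_def step_def)
lemma pw_1: "pw 1 = 2" using pw_Suc[of 0] pw_0 by (simp add: step_def)
lemma pw_2: "pw 2 = 4" using pw_Suc[of 1] pw_1 by (simp add: step_def numeral_2_eq_2)
lemma pw_3: "pw 3 = 8" using pw_Suc[of 2] pw_2 by (simp add: step_def)
lemma pw_4: "pw 4 = 16" using pw_Suc[of 3] pw_3 by (simp add: step_def)
lemma pw_5: "pw 5 = 32" using pw_Suc[of 4] pw_4 by (simp add: step_def)
lemma pw_6: "pw 6 = 64" using pw_Suc[of 5] pw_5 by (simp add: step_def)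
lemma pw_7: "pw 7 = 128" using pw_Suc[of 6] pw_6 by (simp add: step_def)
lemma pw_8: "pw 8 = 29" using pw_Suc[of 7] pw_7 by (simp add: step_def)
lemma pw_9: "pw 9 = 58" using pw_Suc[of 8] pw_8 by (simp add: step_def)
lemma pw_10: "pw 10 = 116" using pw_Suc[of 9] pw_9 by (simp add: step_def)
lemma pw_11: "pw 11 = 232" using pw_Suc[of 10] pw_10 by (simp add: step_def)
lemma pw_12: "pw 12 = 205" using pw_Suc[of 11] pw_11 by (simp add: step_def)
lemma pw_13: "pw 13 = 135" using pw_Suc[of 12] pw_12 by (simp add: step_def)
lemma pw_14: "pw 14 = 19" using pw_Suc[of 13] pw_13 by (simp add: step_def)
lemma pw_15: "pw 15 = 38" using pw_Suc[of 14] pw_14 by (simp add: step_def)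
lemma pw_16: "pw 16 = 76" using pw_Suc[of 15] pw_15 by (simp add: step_def)
lemma pw_17: "pw 17 = 152" using pw_Suc[of 16] pw_16 by (simp add: step_def)
lemma pw_18: "pw 18 = 45" using pw_Suc[of 17] pw_17 by (simp add: step_def)
lemma pw_19: "pw 19 = 90" using pw_Suc[of 18] pw_18 by (simp add: step_def)
lemma pw_20: "pw 20 = 180" using pw_Suc[of 19] pw_19 by (simp add: step_def)
lemma pw_21: "pw 21 = 117" using pw_Suc[of 20] pw_20 by (simp add: step_def)
lemma pw_22: "pw 22 = 234" using pw_Suc[of 21] pw_21 by (simp add: step_def)
lemma pw_23: "pw 23 = 201" using pw_Suc[of 22] pw_22 by (simp add: step_def)
lemma pw_24: "pw 24 = 143" using pw_Suc[of 23] pw_23 by (simp add: step_def)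
lemma pw_25: "pw 25 = 3" using pw_Suc[of 24] pw_24 by (simp add: step_def)
lemma pw_26: "pw 26 = 6" using pw_Suc[of 25] pw_25 by (simp add: step_def)
lemma pw_27: "pw 27 = 12" using pw_Suc[of 26] pw_26 by (simp add: step_def)
lemma pw_28: "pw 28 = 24" using pw_Suc[of 27] pw_27 by (simp add: step_def)
lemma pw_29: "pw 29 = 48" using pw_Suc[of 28] pw_28 by (simp add: step_def)
lemma pw_30: "pw 30 = 96" using pw_Suc[of 29] pw_29 by (simp add: step_def)
lemma pw_31: "pw 31 = 192" using pw_Suc[of 30] pw_30 by (simp add: step_def)
lemma pw_32: "pw 32 = 157" using pw_Suc[of 31] pw_31 by (simp add: step_def)
lemma pw_33: "pw 33 = 39" using pw_Suc[of 32] pw_32 by (simp add: step_def)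
lemma pw_34: "pw 34 = 78" using pw_Suc[of 33] pw_33 by (simp add: step_def)
lemma pw_35: "pw 35 = 156" using pw_Suc[of 34] pw_34 by (simp add: step_def)
lemma pw_36: "pw 36 = 37" using pw_Suc[of 35] pw_35 by (simp add: step_def)
lemma pw_37: "pw 37 = 74" using pw_Suc[of 36] pw_36 by (simp add: step_def)
lemma pw_38: "pw 38 = 148" using pw_Suc[of 37] pw_37 by (simp add: step_def)
lemma pw_39: "pw 39 = 53" using pw_Suc[of 38] pw_38 by (simp add: step_def)
lemma pw_40: "pw 40 = 106" using pw_Suc[of 39] pw_39 by (simp add: step_def)
lemma pw_41: "pw 41 = 212" using pw_Suc[of 40] pw_40 by (simp add: step_def)
lemma pw_42: "pw 42 = 181" using pw_Suc[of 41] pw_41 by (simp add: step_def)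
lemma pw_43: "pw 43 = 119" using pw_Suc[of 42] pw_42 by (simp add: step_def)
lemma pw_44: "pw 44 = 238" using pw_Suc[of 43] pw_43 by (simp add: step_def)
lemma pw_45: "pw 45 = 193" using pw_Suc[of 44] pw_44 by (simp add: step_def)
lemma pw_46: "pw 46 = 159" using pw_Suc[of 45] pw_45 by (simp add: step_def)
lemma pw_47: "pw 47 = 35" using pw_Suc[of 46] pw_46 by (simp add: step_def)
lemma pw_48: "pw 48 = 70" using pw_Suc[of 47] pw_47 by (simp add: step_def)
lemma pw_49: "pw 49 = 140" using pw_Suc[of 48] pw_48 by (simp add: step_def)
lemma pw_50: "pw 50 = 5" using pw_Suc[of 49] pw_49 by (simp add: step_def)
lemma pw_51: "pw 51 = 10" using pw_Suc[of 50] pw_50 by (simp add: step_def)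
lemma pw_52: "pw 52 = 20" using pw_Suc[of 51] pw_51 by (simp add: step_def)
lemma pw_53: "pw 53 = 40" using pw_Suc[of 52] pw_52 by (simp add: step_def)
lemma pw_54: "pw 54 = 80" using pw_Suc[of 53] pw_53 by (simp add: step_def)
lemma pw_55: "pw 55 = 160" using pw_Suc[of 54] pw_54 by (simp add: step_def)
lemma pw_56: "pw 56 = 93" using pw_Suc[of 55] pw_55 by (simp add: step_def)
lemma pw_57: "pw 57 = 186" using pw_Suc[of 56] pw_56 by (simp add: step_def)
lemma pw_58: "pw 58 = 105" using pw_Suc[of 57] pw_57 by (simp add: step_def)
lemma pw_59: "pw 59 = 210" using pw_Suc[of 58] pw_58 by (simp add: step_def)
lemma pw_60: "pw 60 = 185" using pw_Suc[of 59] pw_59 by (simp add: step_def)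
lemma pw_61: "pw 61 = 111" using pw_Suc[of 60] pw_60 by (simp add: step_def)
lemma pw_62: "pw 62 = 222" using pw_Suc[of 61] pw_61 by (simp add: step_def)
lemma pw_63: "pw 63 = 161" using pw_Suc[of 62] pw_62 by (simp add: step_def)
lemma pw_64: "pw 64 = 95" using pw_Suc[of 63] pw_63 by (simp add: step_def)
lemma pw_65: "pw 65 = 190" using pw_Suc[of 64] pw_64 by (simp add: step_def)
lemma pw_66: "pw 66 = 97" using pw_Suc[of 65] pw_65 by (simp add: step_def)
lemma pw_67: "pw 67 = 194" using pw_Suc[of 66] pw_66 by (simp add: step_def)
lemma pw_68: "pw 68 = 153" using pw_Suc[of 67] pw_67 by (simp add: step_def)
lemma pw_69: "pw 69 = 47" using pw_Suc[of 68] pw_68 by (simp add: step_def)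
lemma pw_70: "pw 70 = 94" using pw_Suc[of 69] pw_69 by (simp add: step_def)
lemma pw_71: "pw 71 = 188" using pw_Suc[of 70] pw_70 by (simp add: step_def)
lemma pw_72: "pw 72 = 101" using pw_Suc[of 71] pw_71 by (simp add: step_def)
lemma pw_73: "pw 73 = 202" using pw_Suc[of 72] pw_72 by (simp add: step_def)
lemma pw_74: "pw 74 = 137" using pw_Suc[of 73] pw_73 by (simp add: step_def)
lemma pw_75: "pw 75 = 15" using pw_Suc[of 74] pw_74 by (simp add: step_def)
lemma pw_76: "pw 76 = 30" using pw_Suc[of 75] pw_75 by (simp add: step_def)
lemma pw_77: "pw 77 = 60" using pw_Suc[of 76] pw_76 by (simp add: step_def)
lemma pw_78: "pw 78 = 120" using pw_Suc[of 77] pw_77 by (simp add: step_def)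
lemma pw_79: "pw 79 = 240" using pw_Suc[of 78] pw_78 by (simp add: step_def)
lemma pw_80: "pw 80 = 253" using pw_Suc[of 79] pw_79 by (simp add: step_def)
lemma pw_81: "pw 81 = 231" using pw_Suc[of 80] pw_80 by (simp add: step_def)
lemma pw_82: "pw 82 = 211" using pw_Suc[of 81] pw_81 by (simp add: step_def)
lemma pw_83: "pw 83 = 187" using pw_Suc[of 82] pw_82 by (simp add: step_def)
lemma pw_84: "pw 84 = 107" using pw_Suc[of 83] pw_83 by (simp add: step_def)
lemma pw_85: "pw 85 = 214" using pw_Suc[of 84] pw_84 by (simp add: step_def)
lemma pw_86: "pw 86 = 177" using pw_Suc[of 85] pw_85 by (simp add: step_def)
lemma pw_87: "pw 87 = 127" using pw_Suc[of 86] pw_86 by (simp add: step_def)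
lemma pw_88: "pw 88 = 254" using pw_Suc[of 87] pw_87 by (simp add: step_def)
lemma pw_89: "pw 89 = 225" using pw_Suc[of 88] pw_88 by (simp add: step_def)
lemma pw_90: "pw 90 = 223" using pw_Suc[of 89] pw_89 by (simp add: step_def)
lemma pw_91: "pw 91 = 163" using pw_Suc[of 90] pw_90 by (simp add: step_def)
lemma pw_92: "pw 92 = 91" using pw_Suc[of 91] pw_91 by (simp add: step_def)
lemma pw_93: "pw 93 = 182" using pw_Suc[of 92] pw_92 by (simp add: step_def)
lemma pw_94: "pw 94 = 113" using pw_Suc[of 93] pw_93 by (simp add: step_def)
lemma pw_95: "pw 95 = 226" using pw_Suc[of 94] pw_94 by (simp add: step_def)
lemma pw_96: "pw 96 = 217" using pw_Suc[of 95] pw_95 by (simp add: step_def)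
lemma pw_97: "pw 97 = 175" using pw_Suc[of 96] pw_96 by (simp add: step_def)
lemma pw_98: "pw 98 = 67" using pw_Suc[of 97] pw_97 by (simp add: step_def)
lemma pw_99: "pw 99 = 134" using pw_Suc[of 98] pw_98 by (simp add: step_def)
lemma pw_100: "pw 100 = 17" using pw_Suc[of 99] pw_99 by (simp add: step_def)
lemma pw_101: "pw 101 = 34" using pw_Suc[of 100] pw_100 by (simp add: step_def)
lemma pw_102: "pw 102 = 68" using pw_Suc[of 101] pw_101 by (simp add: step_def)
lemma pw_103: "pw 103 = 136" using pw_Suc[of 102] pw_102 by (simp add: step_def)
lemma pw_104: "pw 104 = 13" using pw_Suc[of 103] pw_103 by (simp add: step_def)
lemma pw_105: "pw 105 = 26" using pw_Suc[of 104] pw_104 by (simp add: step_def)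
lemma pw_106: "pw 106 = 52" using pw_Suc[of 105] pw_105 by (simp add: step_def)
lemma pw_107: "pw 107 = 104" using pw_Suc[of 106] pw_106 by (simp add: step_def)
lemma pw_108: "pw 108 = 208" using pw_Suc[of 107] pw_107 by (simp add: step_def)
lemma pw_109: "pw 109 = 189" using pw_Suc[of 108] pw_108 by (simp add: step_def)
lemma pw_110: "pw 110 = 103" using pw_Suc[of 109] pw_109 by (simp add: step_def)
lemma pw_111: "pw 111 = 206" using pw_Suc[of 110] pw_110 by (simp add: step_def)
lemma pw_112: "pw 112 = 129" using pw_Suc[of 111] pw_111 by (simp add: step_def)
lemma pw_113: "pw 113 = 31" using pw_Suc[of 112] pw_112 by (simp add: step_def)
lemma pw_114: "pw 114 = 62" using pw_Suc[of 113] pw_113 by (simp add: step_def)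
lemma pw_115: "pw 115 = 124" using pw_Suc[of 114] pw_114 by (simp add: step_def)
lemma pw_116: "pw 116 = 248" using pw_Suc[of 115] pw_115 by (simp add: step_def)
lemma pw_117: "pw 117 = 237" using pw_Suc[of 116] pw_116 by (simp add: step_def)
lemma pw_118: "pw 118 = 199" using pw_Suc[of 117] pw_117 by (simp add: step_def)
lemma pw_119: "pw 119 = 147" using pw_Suc[of 118] pw_118 by (simp add: step_def)
lemma pw_120: "pw 120 = 59" using pw_Suc[of 119] pw_119 by (simp add: step_def)
lemma pw_121: "pw 121 = 118" using pw_Suc[of 120] pw_120 by (simp add: step_def)
lemma pw_122: "pw 122 = 236" using pw_Suc[of 121] pw_121 by (simp add: step_def)
lemma pw_123: "pw 123 = 197" using pw_Suc[of 122] pw_122 by (simp add: step_def)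
lemma pw_124: "pw 124 = 151" using pw_Suc[of 123] pw_123 by (simp add: step_def)
lemma pw_125: "pw 125 = 51" using pw_Suc[of 124] pw_124 by (simp add: step_def)
lemma pw_126: "pw 126 = 102" using pw_Suc[of 125] pw_125 by (simp add: step_def)
lemma pw_127: "pw 127 = 204" using pw_Suc[of 126] pw_126 by (simp add: step_def)
lemma pw_128: "pw 128 = 133" using pw_Suc[of 127] pw_127 by (simp add: step_def)
lemma pw_129: "pw 129 = 23" using pw_Suc[of 128] pw_128 by (simp add: step_def)
lemma pw_130: "pw 130 = 46" using pw_Suc[of 129] pw_129 by (simp add: step_def)
lemma pw_131: "pw 131 = 92" using pw_Suc[of 130] pw_130 by (simp add: step_def)
lemma pw_132: "pw 132 = 184" using pw_Suc[of 131] pw_131 by (simp add: step_def)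
lemma pw_133: "pw 133 = 109" using pw_Suc[of 132] pw_132 by (simp add: step_def)
lemma pw_134: "pw 134 = 218" using pw_Suc[of 133] pw_133 by (simp add: step_def)
lemma pw_135: "pw 135 = 169" using pw_Suc[of 134] pw_134 by (simp add: step_def)
lemma pw_136: "pw 136 = 79" using pw_Suc[of 135] pw_135 by (simp add: step_def)
lemma pw_137: "pw 137 = 158" using pw_Suc[of 136] pw_136 by (simp add: step_def)
lemma pw_138: "pw 138 = 33" using pw_Suc[of 137] pw_137 by (simp add: step_def)
lemma pw_139: "pw 139 = 66" using pw_Suc[of 138] pw_138 by (simp add: step_def)
lemma pw_140: "pw 140 = 132" using pw_Suc[of 139] pw_139 by (simp add: step_def)
lemma pw_141: "pw 141 = 21" using pw_Suc[of 140] pw_140 by (simp add: step_def)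
lemma pw_142: "pw 142 = 42" using pw_Suc[of 141] pw_141 by (simp add: step_def)
lemma pw_143: "pw 143 = 84" using pw_Suc[of 142] pw_142 by (simp add: step_def)
lemma pw_144: "pw 144 = 168" using pw_Suc[of 143] pw_143 by (simp add: step_def)
lemma pw_145: "pw 145 = 77" using pw_Suc[of 144] pw_144 by (simp add: step_def)
lemma pw_146: "pw 146 = 154" using pw_Suc[of 145] pw_145 by (simp add: step_def)
lemma pw_147: "pw 147 = 41" using pw_Suc[of 146] pw_146 by (simp add: step_def)
lemma pw_148: "pw 148 = 82" using pw_Suc[of 147] pw_147 by (simp add: step_def)
lemma pw_149: "pw 149 = 164" using pw_Suc[of 148] pw_148 by (simp add: step_def)
lemma pw_150: "pw 150 = 85" using pw_Suc[of 149] pw_149 by (simp add: step_def)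
lemma pw_151: "pw 151 = 170" using pw_Suc[of 150] pw_150 by (simp add: step_def)
lemma pw_152: "pw 152 = 73" using pw_Suc[of 151] pw_151 by (simp add: step_def)
lemma pw_153: "pw 153 = 146" using pw_Suc[of 152] pw_152 by (simp add: step_def)
lemma pw_154: "pw 154 = 57" using pw_Suc[of 153] pw_153 by (simp add: step_def)
lemma pw_155: "pw 155 = 114" using pw_Suc[of 154] pw_154 by (simp add: step_def)
lemma pw_156: "pw 156 = 228" using pw_Suc[of 155] pw_155 by (simp add: step_def)
lemma pw_157: "pw 157 = 213" using pw_Suc[of 156] pw_156 by (simp add: step_def)
lemma pw_158: "pw 158 = 183" using pw_Suc[of 157] pw_157 by (simp add: step_def)
lemma pw_159: "pw 159 = 115" using pw_Suc[of 158] pw_158 by (simp add: step_def)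
lemma pw_160: "pw 160 = 230" using pw_Suc[of 159] pw_159 by (simp add: step_def)
lemma pw_161: "pw 161 = 209" using pw_Suc[of 160] pw_160 by (simp add: step_def)
lemma pw_162: "pw 162 = 191" using pw_Suc[of 161] pw_161 by (simp add: step_def)
lemma pw_163: "pw 163 = 99" using pw_Suc[of 162] pw_162 by (simp add: step_def)
lemma pw_164: "pw 164 = 198" using pw_Suc[of 163] pw_163 by (simp add: step_def)
lemma pw_165: "pw 165 = 145" using pw_Suc[of 164] pw_164 by (simp add: step_def)
lemma pw_166: "pw 166 = 63" using pw_Suc[of 165] pw_165 by (simp add: step_def)
lemma pw_167: "pw 167 = 126" using pw_Suc[of 166] pw_166 by (simp add: step_def)
lemma pw_168: "pw 168 = 252" using pw_Suc[of 167] pw_167 by (simp add: step_def)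
lemma pw_169: "pw 169 = 229" using pw_Suc[of 168] pw_168 by (simp add: step_def)
lemma pw_170: "pw 170 = 215" using pw_Suc[of 169] pw_169 by (simp add: step_def)
lemma pw_171: "pw 171 = 179" using pw_Suc[of 170] pw_170 by (simp add: step_def)
lemma pw_172: "pw 172 = 123" using pw_Suc[of 171] pw_171 by (simp add: step_def)
lemma pw_173: "pw 173 = 246" using pw_Suc[of 172] pw_172 by (simp add: step_def)
lemma pw_174: "pw 174 = 241" using pw_Suc[of 173] pw_173 by (simp add: step_def)
lemma pw_175: "pw 175 = 255" using pw_Suc[of 174] pw_174 by (simp add: step_def)
lemma pw_176: "pw 176 = 227" using pw_Suc[of 175] pw_175 by (simp add: step_def)
lemma pw_177: "pw 177 = 219" using pw_Suc[of 176] pw_176 by (simp add: step_def)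
lemma pw_178: "pw 178 = 171" using pw_Suc[of 177] pw_177 by (simp add: step_def)
lemma pw_179: "pw 179 = 75" using pw_Suc[of 178] pw_178 by (simp add: step_def)
lemma pw_180: "pw 180 = 150" using pw_Suc[of 179] pw_179 by (simp add: step_def)
lemma pw_181: "pw 181 = 49" using pw_Suc[of 180] pw_180 by (simp add: step_def)
lemma pw_182: "pw 182 = 98" using pw_Suc[of 181] pw_181 by (simp add: step_def)
lemma pw_183: "pw 183 = 196" using pw_Suc[of 182] pw_182 by (simp add: step_def)
lemma pw_184: "pw 184 = 149" using pw_Suc[of 183] pw_183 by (simp add: step_def)
lemma pw_185: "pw 185 = 55" using pw_Suc[of 184] pw_184 by (simp add: step_def)
lemma pw_186: "pw 186 = 110" using pw_Suc[of 185] pw_185 by (simp add: step_def)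
lemma pw_187: "pw 187 = 220" using pw_Suc[of 186] pw_186 by (simp add: step_def)
lemma pw_188: "pw 188 = 165" using pw_Suc[of 187] pw_187 by (simp add: step_def)
lemma pw_189: "pw 189 = 87" using pw_Suc[of 188] pw_188 by (simp add: step_def)
lemma pw_190: "pw 190 = 174" using pw_Suc[of 189] pw_189 by (simp add: step_def)
lemma pw_191: "pw 191 = 65" using pw_Suc[of 190] pw_190 by (simp add: step_def)
lemma pw_192: "pw 192 = 130" using pw_Suc[of 191] pw_191 by (simp add: step_def)
lemma pw_193: "pw 193 = 25" using pw_Suc[of 192] pw_192 by (simp add: step_def)
lemma pw_194: "pw 194 = 50" using pw_Suc[of 193] pw_193 by (simp add: step_def)
lemma pw_195: "pw 195 = 100" using pw_Suc[of 194] pw_194 by (simp add: step_def)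
lemma pw_196: "pw 196 = 200" using pw_Suc[of 195] pw_195 by (simp add: step_def)
lemma pw_197: "pw 197 = 141" using pw_Suc[of 196] pw_196 by (simp add: step_def)
lemma pw_198: "pw 198 = 7" using pw_Suc[of 197] pw_197 by (simp add: step_def)
lemma pw_199: "pw 199 = 14" using pw_Suc[of 198] pw_198 by (simp add: step_def)
lemma pw_200: "pw 200 = 28" using pw_Suc[of 199] pw_199 by (simp add: step_def)
lemma pw_201: "pw 201 = 56" using pw_Suc[of 200] pw_200 by (simp add: step_def)
lemma pw_202: "pw 202 = 112" using pw_Suc[of 201] pw_201 by (simp add: step_def)
lemma pw_203: "pw 203 = 224" using pw_Suc[of 202] pw_202 by (simp add: step_def)
lemma pw_204: "pw 204 = 221" using pw_Suc[of 203] pw_203 by (simp add: step_def)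
lemma pw_205: "pw 205 = 167" using pw_Suc[of 204] pw_204 by (simp add: step_def)
lemma pw_206: "pw 206 = 83" using pw_Suc[of 205] pw_205 by (simp add: step_def)
lemma pw_207: "pw 207 = 166" using pw_Suc[of 206] pw_206 by (simp add: step_def)
lemma pw_208: "pw 208 = 81" using pw_Suc[of 207] pw_207 by (simp add: step_def)
lemma pw_209: "pw 209 = 162" using pw_Suc[of 208] pw_208 by (simp add: step_def)
lemma pw_210: "pw 210 = 89" using pw_Suc[of 209] pw_209 by (simp add: step_def)
lemma pw_211: "pw 211 = 178" using pw_Suc[of 210] pw_210 by (simp add: step_def)
lemma pw_212: "pw 212 = 121" using pw_Suc[of 211] pw_211 by (simp add: step_def)
lemma pw_213: "pw 213 = 242" using pw_Suc[of 212] pw_212 by (simp add: step_def)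
lemma pw_214: "pw 214 = 249" using pw_Suc[of 213] pw_213 by (simp add: step_def)
lemma pw_215: "pw 215 = 239" using pw_Suc[of 214] pw_214 by (simp add: step_def)
lemma pw_216: "pw 216 = 195" using pw_Suc[of 215] pw_215 by (simp add: step_def)
lemma pw_217: "pw 217 = 155" using pw_Suc[of 216] pw_216 by (simp add: step_def)
lemma pw_218: "pw 218 = 43" using pw_Suc[of 217] pw_217 by (simp add: step_def)
lemma pw_219: "pw 219 = 86" using pw_Suc[of 218] pw_218 by (simp add: step_def)
lemma pw_220: "pw 220 = 172" using pw_Suc[of 219] pw_219 by (simp add: step_def)
lemma pw_221: "pw 221 = 69" using pw_Suc[of 220] pw_220 by (simp add: step_def)
lemma pw_222: "pw 222 = 138" using pw_Suc[of 221] pw_221 by (simp add: step_def)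
lemma pw_223: "pw 223 = 9" using pw_Suc[of 222] pw_222 by (simp add: step_def)
lemma pw_224: "pw 224 = 18" using pw_Suc[of 223] pw_223 by (simp add: step_def)
lemma pw_225: "pw 225 = 36" using pw_Suc[of 224] pw_224 by (simp add: step_def)
lemma pw_226: "pw 226 = 72" using pw_Suc[of 225] pw_225 by (simp add: step_def)
lemma pw_227: "pw 227 = 144" using pw_Suc[of 226] pw_226 by (simp add: step_def)
lemma pw_228: "pw 228 = 61" using pw_Suc[of 227] pw_227 by (simp add: step_def)
lemma pw_229: "pw 229 = 122" using pw_Suc[of 228] pw_228 by (simp add: step_def)
lemma pw_230: "pw 230 = 244" using pw_Suc[of 229] pw_229 by (simp add: step_def)
lemma pw_231: "pw 231 = 245" using pw_Suc[of 230] pw_230 by (simp add: step_def)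
lemma pw_232: "pw 232 = 247" using pw_Suc[of 231] pw_231 by (simp add: step_def)
lemma pw_233: "pw 233 = 243" using pw_Suc[of 232] pw_232 by (simp add: step_def)
lemma pw_234: "pw 234 = 251" using pw_Suc[of 233] pw_233 by (simp add: step_def)
lemma pw_235: "pw 235 = 235" using pw_Suc[of 234] pw_234 by (simp add: step_def)
lemma pw_236: "pw 236 = 203" using pw_Suc[of 235] pw_235 by (simp add: step_def)
lemma pw_237: "pw 237 = 139" using pw_Suc[of 236] pw_236 by (simp add: step_def)
lemma pw_238: "pw 238 = 11" using pw_Suc[of 237] pw_237 by (simp add: step_def)
lemma pw_239: "pw 239 = 22" using pw_Suc[of 238] pw_238 by (simp add: step_def)
lemma pw_240: "pw 240 = 44" using pw_Suc[of 239] pw_239 by (simp add: step_def)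
lemma pw_241: "pw 241 = 88" using pw_Suc[of 240] pw_240 by (simp add: step_def)
lemma pw_242: "pw 242 = 176" using pw_Suc[of 241] pw_241 by (simp add: step_def)
lemma pw_243: "pw 243 = 125" using pw_Suc[of 242] pw_242 by (simp add: step_def)
lemma pw_244: "pw 244 = 250" using pw_Suc[of 243] pw_243 by (simp add: step_def)
lemma pw_245: "pw 245 = 233" using pw_Suc[of 244] pw_244 by (simp add: step_def)
lemma pw_246: "pw 246 = 207" using pw_Suc[of 245] pw_245 by (simp add: step_def)
lemma pw_247: "pw 247 = 131" using pw_Suc[of 246] pw_246 by (simp add: step_def)
lemma pw_248: "pw 248 = 27" using pw_Suc[of 247] pw_247 by (simp add: step_def)
lemma pw_249: "pw 249 = 54" using pw_Suc[of 248] pw_248 by (simp add: step_def)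
lemma pw_250: "pw 250 = 108" using pw_Suc[of 249] pw_249 by (simp add: step_def)
lemma pw_251: "pw 251 = 216" using pw_Suc[of 250] pw_250 by (simp add: step_def)
lemma pw_252: "pw 252 = 173" using pw_Suc[of 251] pw_251 by (simp add: step_def)
lemma pw_253: "pw 253 = 71" using pw_Suc[of 252] pw_252 by (simp add: step_def)
lemma pw_254: "pw 254 = 142" using pw_Suc[of 253] pw_253 by (simp add: step_def)
lemma pw_255: "pw 255 = 1" using pw_Suc[of 254] pw_254 by (simp add: step_def)
lemmas pw_table = pw_0 pw_1s pw_1 pw_2 pw_3 pw_4 pw_5 pw_6 pw_7 pw_8 pw_9 pw_10 pw_11 pw_12 pw_13 pw_14 pw_15 pw_16 pw_17 pw_18 pw_19 pw_20 pw_21 pw_22 pw_23 pw_24 pw_25 pw_26 pw_27 pw_28 pw_29 pw_30 pw_31 pw_32 pw_33 pw_34 pw_35 pw_36 pw_37 pw_38 pw_39 pw_40 pw_41 pw_42 pw_43 pw_44 pw_45 pw_46 pw_47 pw_48 pw_49 pw_50 pw_51 pw_52 pw_53 pw_54 pw_55 pw_56 pw_57 pw_58 pw_59 pw_60 pw_61 pw_62 pw_63 pw_64 pw_65 pw_66 pw_67 pw_68 pw_69 pw_70 pw_71 pw_72 pw_73 pw_74 pw_75 pw_76 pw_77 pw_78 pw_79 pw_80 pw_81 pw_82 pw_83 pw_84 pw_85 pw_86 pw_87 pw_88 pw_89 pw_90 pw_91 pw_92 pw_93 pw_94 pw_95 pw_96 pw_97 pw_98 pw_99 pw_100 pw_101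 pw_102 pw_103 pw_104 pw_105 pw_106 pw_107 pw_108 pw_109 pw_110 pw_111 pw_112 pw_113 pw_114 pw_115 pw_116 pw_117 pw_118 pw_119 pw_120 pw_121 pw_122 pw_123 pw_124 pw_125 pw_126 pw_127 pw_128 pw_129 pw_130 pw_131 pw_132 pw_133 pw_134 pw_135 pw_136 pw_137 pw_138 pw_139 pw_140 pw_141 pw_142 pw_143 pw_144 pw_145 pw_146 pw_147 pw_148 pw_149 pw_150 pw_151 pw_152 pw_153 pw_154 pw_155 pw_156 pw_157 pw_158 pw_159 pw_160 pw_161 pw_162 pw_163 pw_164 pw_165 pw_166 pw_167 pw_168 pw_169 pw_170 pw_171 pw_172 pw_173 pw_174 pw_175 pw_176 pw_177 pw_178 pw_179 pw_180 pw_181 pw_182 pw_183 pw_184 pw_185 pw_186 pw_187 pw_188 pw_189 pw_190 pw_191 pw_192 pw_193 pw_194 pw_195 pw_196 pw_197 pw_198 pw_199 pw_200 pw_201 pw_202 pw_203 pw_204 pw_205 pw_206 pw_207 pw_208 pw_209 pw_210 pw_211 pw_212 pw_213 pw_214 pw_215 pw_216 pw_217 pw_218 pw_219 pw_220 pw_221 pw_222 pw_223 pw_224 pw_225 pw_226 pw_227 pw_228 pw_229 pw_230 pw_231 pw_232 pw_233 pw_234 pw_235 pw_236 pw_237 pw_238 pw_239 pw_240 pw_241 pw_242 pw_243 pw_244 pw_245 pw_246 pw_247 pw_248 pw_249 pw_250 pw_251 pw_252 pw_253 pw_254 pw_255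

lemma pw_ne1_all: "\<forall>k\<in>{..<255}. 0 < k \<longrightarrow> pw k \<noteq> 1"
  apply (simp only: lessThan_nat_numeral pred_numeral_simps BitM.simps ball_simps)
  apply (simp add: pw_table)
  done


lemma lin_step: "lin step"
  unfolding step_def by (rule lin_colmap)

lemma pw_add: "pw (a + b) = (step ^^ a) (pw b)"
  by (simp add: pw_def funpow_add)

lemma step_lt: "step x < 256"
proof -
  have "step x < 2^8" unfolding step_def by (rule colmap_bound) simp
  then show ?thesis by simp
qed

lemma pw_lt: "pw k < 256"
  by (cases k) (simp_all add: pw_0 pw_Suc step_lt)

lemma pw_255_periodic: "pw (k + 255) = pw k"
proof -
  have "pw (k + 255) = (step ^^ k) (pw 255)" by (rule pw_add)
  also have "\<dots> = (step ^^ k) 1" by (simp only: pw_255)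
  also have "\<dots> = pw k" by (simp only: pw_def)
  finally show ?thesis .
qed

lemma pw_mult_periodic: "pw (k + 255 * m) = pw k"
proof (induction m)
  case 0
  then show ?case by simp
next
  case (Suc m)
  have "pw (k + 255 * Suc m) = pw ((k + 255 * m) + 255)" by (simp add: algebra_simps)
  then show ?case using Suc pw_255_periodic by simp
qed

lemma pw_mod: "pw k = pw (k mod 255)"
  using pw_mult_periodic[of "k mod 255" "k div 255"] by simp

lemma pw_ne1: "0 < k \<Longrightarrow> k < 255 \<Longrightarrow> pw k \<noteq> 1"
proof -
  assume "0 < k" "k < 255"
  moreover have "k \<in> {..<255}" using \<open>k < 255\<close> by (simp only: lessThan_iff)
  ultimately show ?thesis using bspec[OF pw_ne1_all] by metis
qed

lemma pw_inj_aux: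
  assumes ab: "a < b" "b < 255"
  shows "pw a \<noteq> pw b"
proof
  assume eq: "pw a = pw b"
  have 1: "pw ((255 - b) + a) = (step ^^ (255 - b)) (pw a)" by (rule pw_add)
  have 2: "pw ((255 - b) + b) = (step ^^ (255 - b)) (pw b)" by (rule pw_add)
  have 3: "(255 - b) + b = 255" using ab by arith
  have "pw ((255 - b) + a) = 1" using 1 2 3 eq pw_255 by simp
  moreover have "0 < (255 - b) + a" "(255 - b) + a < 255" using ab by arith+
  ultimately show False using pw_ne1 by metis
qed

lemma pw_inj: "inj_on pw {..<255}"
proof (rule inj_onI)
  fix a b assume a: "a \<in> {..<255}" and b: "b \<in> {..<255}" and eq: "pw a = pw b"
  have a': "a < 255" using a by (simp only: lessThan_iff)
  have b': "b < 255" using b by (simp only: lessThan_iff)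
  show "a = b"
  proof (rule ccontr)
    assume "a \<noteq> b"
    then have "a < b \<or> b < a" by arith
    then show False using pw_inj_aux[of a b] pw_inj_aux[of b a] a' b' eq by auto
  qed
qed

lemma pw_eq_iff: "a < 255 \<Longrightarrow> b < 255 \<Longrightarrow> pw a = pw b \<longleftrightarrow> a = b"
  using inj_onD[OF pw_inj, of a b] by auto

lemma pw_nz: "pw k \<noteq> 0"
proof
  assume h: "pw k = 0"
  define e where "e = k mod 255"
  have e: "e < 255" "pw e = 0" using h pw_mod[of k] by (auto simp: e_def)
  have "pw ((255 - e) + e) = (step ^^ (255 - e)) (pw e)" by (rule pw_add)
  also have "\<dots> = (step ^^ (255 - e)) 0" by (simp only: e(2))
  also have "\<dots> = 0" by (rule lin_0[OF lin_funpow[OF lin_step]])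
  finally have "pw ((255 - e) + e) = 0" .
  moreover have "(255 - e) + e = 255" using e by arith
  ultimately have "pw 255 = 0" by simp
  then show False by (simp only: pw_255)
qed

lemma pw_image: "pw ` {..<255} = {1..<256}"
proof (rule card_subset_eq)
  show "pw ` {..<255} \<subseteq> {1..<256}"
  proof
    fix x assume "x \<in> pw ` {..<255}"
    then obtain e where "x = pw e" by blast
    then have "x \<noteq> 0" "x < 256" using pw_nz pw_lt by auto
    then show "x \<in> {1..<256}" by simp
  qed
  have "card (pw ` {..<255}) = card {..<255::nat}" by (rule card_image[OF pw_inj])
  then show "card (pw ` {..<255}) = card {1..<(256::nat)}" by simp
qed simp

lemma pw_surj: "0 < n \<Longrightarrow> n < 256 \<Longrightarrow> \<exists>e<255. pw e = n"
proof -
  assume "0 < n" "n < 256"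
  then have "n \<in> pw ` {..<255}" unfolding pw_image by simp
  then show ?thesis by auto
qed

definition xcl :: "nat set \<Rightarrow> bool" where
  "xcl A \<longleftrightarrow> 0 \<in> A \<and> (\<forall>x\<in>A. \<forall>y\<in>A. xor x y \<in> A)"

definition cls :: "nat \<Rightarrow> nat \<Rightarrow> nat set" where
  "cls d j = insert 0 (pw ` {e. e < 255 \<and> e mod d = j})"

definition zech :: "nat \<Rightarrow> bool" where
  "zech d \<longleftrightarrow> (\<forall>c. 0 < c \<longrightarrow> c < 255 \<longrightarrow> d dvd c \<longrightarrow> (\<exists>z. d dvd z \<and> xor 1 (pw c) = pw z))"

lemma cls_xor_aux:
  assumes d: "d dvd 255" and z: "zech d" and ab: "a < b" "b < 255"
    and m: "a mod d = j" "b mod d = j"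
  shows "xor (pw a) (pw b) \<in> cls d j"
proof -
  define c where "c = b - a"
  have dc: "d dvd c" using m ab mod_eq_dvd_iff_nat[of a b d] by (simp add: c_def)
  have c: "0 < c" "c < 255" using ab by (auto simp: c_def)
  obtain w where w: "d dvd w" "xor 1 (pw c) = pw w" using z dc c unfolding zech_def by blast
  have "xor (pw a) (pw b) = xor ((step ^^ a) (pw 0)) ((step ^^ a) (pw c))"
    using pw_add[of a 0] pw_add[of a c] ab by (simp add: c_def)
  also have "\<dots> = (step ^^ a) (xor (pw 0) (pw c))"
    using lin_funpow[OF lin_step, of a] unfolding lin_def by simp
  also have "\<dots> = pw (a + w)" using w pw_add[of a w] by (simp add: pw_0)
  also have "\<dots> = pw ((a + w) mod 255)" by (rule pw_mod)
  finally have eq: "xor (pw a) (pw b) = pw ((a + w) mod 255)" .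
  have "((a + w) mod 255) mod d = (a + w) mod d" using d by (simp add: mod_mod_cancel)
  also have "\<dots> = a mod d" using w(1) by (auto elim!: dvdE)
  finally have "((a + w) mod 255) mod d = j" using m by simp
  then show ?thesis unfolding eq cls_def by auto
qed

lemma xcl_cls:
  assumes d: "d dvd 255" and z: "zech d"
  shows "xcl (cls d j)"
  unfolding xcl_def
proof (intro conjI ballI)
  show "0 \<in> cls d j" by (simp add: cls_def)
  fix x y assume x: "x \<in> cls d j" and y: "y \<in> cls d j"
  show "xor x y \<in> cls d j"
  proof (cases "x = 0 \<or> y = 0")
    case True
    then show ?thesis using x y by auto
  next
    case False
    then obtain a b where a: "a < 255" "a mod d = j" "x = pw a" and b: "b < 255" "b mod d = j" "y = pw b"
      using x y unfolding cls_def by auto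
    consider "a < b" | "a = b" | "b < a" by linarith
    then show ?thesis
    proof cases
      case 1 then show ?thesis using cls_xor_aux[OF d z 1 b(1) a(2) b(2)] a b by simp
    next
      case 2 then show ?thesis using a b by (simp add: cls_def)
    next
      case 3 then show ?thesis using cls_xor_aux[OF d z 3 a(1) b(2) a(2)] a b by (simp add: xor.commute)
    qed
  qed
qed

lemma cls_sub: "cls d j \<subseteq> {..<256}"
  unfolding cls_def using pw_lt by auto

lemma mem_cls: "e < 255 \<Longrightarrow> pw e \<in> cls d j \<longleftrightarrow> e mod d = j"
proof
  assume e: "e < 255" and "pw e \<in> cls d j"
  then obtain e' where "e' < 255" "e' mod d = j" "pw e = pw e'"
    using pw_nz[of e] unfolding cls_def by auto
  then show "e mod d = j" using e pw_eq_iff by metis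
next
  assume "e < 255" "e mod d = j"
  then show "pw e \<in> cls d j" unfolding cls_def by auto
qed

lemma card_cls:
  assumes dm: "d * m = 255" and j: "j < d"
  shows "card (cls d j) = m + 1"
proof -
  have dpos: "0 < d" using j by simp
  have set: "{e. e < 255 \<and> e mod d = j} = (\<lambda>t. j + d * t) ` {..<m}"
  proof (intro set_eqI iffI)
    fix e assume "e \<in> {e. e < 255 \<and> e mod d = j}"
    then have e: "e < d * m" "e mod d = j" using dm by auto
    have "e div d < m" using e(1) dpos by (simp add: div_less_iff_less_mult mult.commute)
    moreover have "e = j + d * (e div d)" using e(2) by (metis mod_div_mult_eq add.commute mult.commute)
    ultimately show "e \<in> (\<lambda>t. j + d * t) ` {..<m}" by auto
  next
    fix e assume "e \<in> (\<lambda>t. j + d * t) ` {..<m}"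
    then obtain t where t: "t < m" "e = j + d * t" by auto
    have "j + d * t < d + d * t" using j by simp
    also have "\<dots> = d * (t + 1)" by (simp add: algebra_simps)
    also have "\<dots> \<le> d * m" using t by (intro mult_le_mono2) simp
    finally have "e < 255" using t dm by simp
    moreover have "e mod d = j" using t j by simp
    ultimately show "e \<in> {e. e < 255 \<and> e mod d = j}" by simp
  qed
  have c1: "card {e. e < 255 \<and> e mod d = j} = m"
    unfolding set using dpos by (subst card_image) (auto simp: inj_on_def)
  have sub: "{e. e < 255 \<and> e mod d = j} \<subseteq> {..<255}" by auto
  have c2: "card (pw ` {e. e < 255 \<and> e mod d = j}) = m"
    using c1 card_image[OF inj_on_subset[OF pw_inj sub]] by simp
  have "0 \<notin> pw ` {e. e < 255 \<and> e mod d = j}" using pw_nz by (metis imageE)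
  then show ?thesis unfolding cls_def using c2 by simp
qed


lemma zech17: "zech 17"
  unfolding zech_def
proof (intro allI impI)
  fix c :: nat assume c: "0 < c" "c < 255" "17 dvd c"
  then obtain t where t: "c = 17 * t" by (auto elim!: dvdE)
  then have "0 < t" "t < 15" using c by auto
  then have "t = 1 \<or> t = 2 \<or> t = 3 \<or> t = 4 \<or> t = 5 \<or> t = 6 \<or> t = 7 \<or> t = 8 \<or> t = 9 \<or> t = 10 \<or> t = 11 \<or> t = 12 \<or> t = 13 \<or> t = 14" by presburger
  then show "\<exists>z. 17 dvd z \<and> xor 1 (pw c) = pw z"
  proof (elim disjE)
    assume "t = 1"
    then show ?thesis by (intro exI[of _ "17 * 4"]) (simp add: t pw_table)
  next
    assume "t = 2"
    then show ?thesis by (intro exI[of _ "17 * 8"]) (simp add: t pw_table)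
  next
    assume "t = 3"
    then show ?thesis by (intro exI[of _ "17 * 14"]) (simp add: t pw_table)
  next
    assume "t = 4"
    then show ?thesis by (intro exI[of _ "17 * 1"]) (simp add: t pw_table)
  next
    assume "t = 5"
    then show ?thesis by (intro exI[of _ "17 * 10"]) (simp add: t pw_table)
  next
    assume "t = 6"
    then show ?thesis by (intro exI[of _ "17 * 13"]) (simp add: t pw_table)
  next
    assume "t = 7"
    then show ?thesis by (intro exI[of _ "17 * 9"]) (simp add: t pw_table)
  next
    assume "t = 8"
    then show ?thesis by (intro exI[of _ "17 * 2"]) (simp add: t pw_table)
  next
    assume "t = 9"
    then show ?thesis by (intro exI[of _ "17 * 7"]) (simp add: t pw_table)
  next
    assume "t = 10"
    then show ?thesis by (intro exI[of _ "17 * 5"]) (simp add: t pw_table)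
  next
    assume "t = 11"
    then show ?thesis by (intro exI[of _ "17 * 12"]) (simp add: t pw_table)
  next
    assume "t = 12"
    then show ?thesis by (intro exI[of _ "17 * 11"]) (simp add: t pw_table)
  next
    assume "t = 13"
    then show ?thesis by (intro exI[of _ "17 * 6"]) (simp add: t pw_table)
  next
    assume "t = 14"
    then show ?thesis by (intro exI[of _ "17 * 3"]) (simp add: t pw_table)
  qed
qed

lemma zech85: "zech 85"
  unfolding zech_def
proof (intro allI impI)
  fix c :: nat assume c: "0 < c" "c < 255" "85 dvd c"
  then obtain t where t: "c = 85 * t" by (auto elim!: dvdE)
  then have "0 < t" "t < 3" using c by auto
  then have "t = 1 \<or> t = 2" by presburger
  then show "\<exists>z. 85 dvd z \<and> xor 1 (pw c) = pw z"
  proof (elim disjE)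
    assume "t = 1"
    then show ?thesis by (intro exI[of _ "85 * 2"]) (simp add: t pw_table)
  next
    assume "t = 2"
    then show ?thesis by (intro exI[of _ "85 * 1"]) (simp add: t pw_table)
  qed
qed



definition Wc :: "nat list" where "Wc = [1,214,2,177,4,127]"

definition Wn :: "nat set" where "Wn = colmap Wc ` {..<64}"

lemma xcl_Wn: "xcl Wn"
  unfolding xcl_def Wn_def
proof (intro conjI ballI)
  have "colmap Wc 0 = 0" by (rule lin_0[OF lin_colmap])
  then show "0 \<in> colmap Wc ` {..<64}" by force
  fix x y assume "x \<in> colmap Wc ` {..<64}" "y \<in> colmap Wc ` {..<64}"
  then obtain a b where ab: "a < 64" "b < 64" "x = colmap Wc a" "y = colmap Wc b" by auto
  have "xor a b < 2^6" using ab xor_lt_pow[of a 6 b] by simp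
  then have "xor a b < 64" by simp
  moreover have "xor x y = colmap Wc (xor a b)" using ab colmap_xor by simp
  ultimately show "xor x y \<in> colmap Wc ` {..<64}" by auto
qed

lemma Wn_sub: "Wn \<subseteq> {..<256}"
proof
  fix x assume "x \<in> Wn"
  then obtain a where "x = colmap Wc a" unfolding Wn_def by auto
  moreover have "colmap Wc a < 2^8" by (rule colmap_bound) (simp add: Wc_def)
  ultimately show "x \<in> {..<256}" by simp
qed

lemma Wn_kernel: "\<forall>y\<in>{..<64}. colmap Wc y = 0 \<longrightarrow> y = 0"
  apply (simp only: lessThan_nat_numeral pred_numeral_simps BitM.simps ball_simps)
  apply (simp add: Wc_def)
  done

lemma Wn_card: "card Wn = 64"
proof -
  have "inj_on (colmap Wc) {..<64}"
  proof (rule inj_onI)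
    fix a b :: nat assume a: "a \<in> {..<64}" and b: "b \<in> {..<64}" and eq: "colmap Wc a = colmap Wc b"
    have "xor a b < 2^6" using a b xor_lt_pow[of a 6 b] by simp
    then have "xor a b \<in> {..<64}" by simp
    moreover have "colmap Wc (xor a b) = 0" using eq colmap_xor by (simp add: xor_self_eq)
    ultimately have "xor a b = 0" using Wn_kernel by blast
    then show "a = b" by (rule xor_eq0)
  qed
  then show ?thesis unfolding Wn_def by (simp add: card_image)
qed

lemma Wn_alpha_cols: "map (step ^^ 85) Wc = map (colmap Wc) [2,3,8,12,32,48]"
proof -
  have Wc_eq: "Wc = map pw [0,85,1,86,2,87]" by (simp add: Wc_def pw_table)
  have "map (step ^^ 85) Wc = map pw [85 + 0, 85 + 85, 85 + 1, 85 + 86, 85 + 2, 85 + 87]"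
    by (simp only: Wc_eq list.map pw_add[symmetric])
  also have "\<dots> = map (colmap Wc) [2,3,8,12,32,48]"
    by (simp add: pw_table Wc_def)
  finally show ?thesis .
qed

lemma Wn_alpha: "x \<in> Wn \<Longrightarrow> (step ^^ 85) x \<in> Wn"
proof -
  assume "x \<in> Wn"
  then obtain a where a: "x = colmap Wc a" unfolding Wn_def by auto
  have "(step ^^ 85) x = colmap (map (step ^^ 85) Wc) a"
    unfolding a by (rule lin_comp_colmap[OF lin_funpow[OF lin_step]])
  also have "\<dots> = colmap (map (colmap Wc) [2,3,8,12,32,48]) a" by (simp only: Wn_alpha_cols)
  also have "\<dots> = colmap Wc (colmap [2,3,8,12,32,48] a)"
    by (rule lin_comp_colmap[OF lin_colmap, symmetric])
  finally have eq: "(step ^^ 85) x = colmap Wc (colmap [2,3,8,12,32,48] a)" .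
  have "colmap [2,3,8,12,32,48] a < 2^6" by (rule colmap_bound) simp
  then show ?thesis unfolding eq Wn_def by simp
qed

lemma Wn_alpha_iter: "x \<in> Wn \<Longrightarrow> (step ^^ (85 * q)) x \<in> Wn"
proof (induction q)
  case 0
  then show ?case by simp
next
  case (Suc q)
  have "(step ^^ (85 * Suc q)) x = (step ^^ 85) ((step ^^ (85 * q)) x)"
    by (simp add: funpow_add)
  then show ?case using Suc Wn_alpha by simp
qed

lemma Wn_dich: "e < 255 \<Longrightarrow> (pw e \<in> Wn \<longleftrightarrow> pw (e mod 85) \<in> Wn)"
proof -
  assume e: "e < 255"
  define q r where "q = e div 85" and "r = e mod 85"
  have er: "e = 85 * q + r" by (simp add: q_def r_def)
  have q: "q \<le> 2" using e by (simp add: q_def)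
  have 1: "pw e = (step ^^ (85 * q)) (pw r)" unfolding er by (rule pw_add)
  have "pw r = pw (r + 255)" by (rule pw_255_periodic[symmetric])
  also have "r + 255 = 85 * (3 - q) + e" using q er by simp
  finally have 2: "pw r = (step ^^ (85 * (3 - q))) (pw e)" by (simp only: pw_add)
  show ?thesis unfolding r_def[symmetric]
    using 1 2 Wn_alpha_iter by metis
qed

definition npart :: "nat set set \<Rightarrow> bool" where
  "npart F \<longleftrightarrow> (\<forall>A\<in>F. xcl A \<and> A \<subseteq> {..<256} \<and> card A \<noteq> 1) \<and>
     (\<forall>n. 0 < n \<longrightarrow> n < 256 \<longrightarrow> (\<exists>!A. A \<in> F \<and> n \<in> A))"

definition FamI :: "nat \<Rightarrow> nat set set" where
  "FamI i = cls 17 ` {i..<17} \<union> cls 85 ` {k. k < 85 \<and> k mod 17 < i}"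

definition FamW :: "nat set set" where
  "FamW = insert Wn (cls 85 ` {k. k < 85 \<and> pw k \<notin> Wn})"

lemma card_cls17: "j < 17 \<Longrightarrow> card (cls 17 j) = 16"
  using card_cls[of 17 15 j] by simp

lemma card_cls85: "k < 85 \<Longrightarrow> card (cls 85 k) = 4"
  using card_cls[of 85 3 k] by simp

lemma good_cls17: "j < 17 \<Longrightarrow> xcl (cls 17 j) \<and> cls 17 j \<subseteq> {..<256} \<and> card (cls 17 j) \<noteq> 1"
  using xcl_cls[OF _ zech17] cls_sub card_cls17 by simp

lemma good_cls85: "k < 85 \<Longrightarrow> xcl (cls 85 k) \<and> cls 85 k \<subseteq> {..<256} \<and> card (cls 85 k) \<noteq> 1"
  using xcl_cls[OF _ zech85] cls_sub card_cls85 by simp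

lemma mod85_17: "(e::nat) mod 85 mod 17 = e mod 17"
  by (simp add: mod_mod_cancel)

lemma npart_FamI: "npart (FamI i)"
  unfolding npart_def
proof (rule conjI)
  show "\<forall>A\<in>FamI i. xcl A \<and> A \<subseteq> {..<256} \<and> card A \<noteq> 1"
  proof
    fix A assume "A \<in> FamI i"
    then have "(\<exists>j<17. A = cls 17 j) \<or> (\<exists>k<85. A = cls 85 k)" unfolding FamI_def by auto
    then show "xcl A \<and> A \<subseteq> {..<256} \<and> card A \<noteq> 1" using good_cls17 good_cls85 by metis
  qed
next
  show "\<forall>n. 0 < n \<longrightarrow> n < 256 \<longrightarrow> (\<exists>!A. A \<in> FamI i \<and> n \<in> A)"
  proof (intro allI impI)
  fix n :: nat assume n: "0 < n" "n < 256"
  then obtain e where e: "e < 255" "pw e = n" using pw_surj[of n] by auto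
  have m17: "e mod 17 < 17" and m85: "e mod 85 < 85" by simp_all
  show "\<exists>!A. A \<in> FamI i \<and> n \<in> A"
  proof (cases "i \<le> e mod 17")
    case True
    show ?thesis
    proof (rule ex1I[of _ "cls 17 (e mod 17)"])
      show "cls 17 (e mod 17) \<in> FamI i \<and> n \<in> cls 17 (e mod 17)"
        unfolding FamI_def using True m17 e mem_cls[of e 17 "e mod 17"] by auto
      fix A assume A: "A \<in> FamI i \<and> n \<in> A"
      then consider j where "j \<in> {i..<17}" "A = cls 17 j" | k where "k < 85" "k mod 17 < i" "A = cls 85 k"
        unfolding FamI_def by auto
      then show "A = cls 17 (e mod 17)"
      proof cases
        case 1
        then show ?thesis using A e mem_cls[of e 17 j] by auto
      next
        case 2
        then have "e mod 85 = k" using A e mem_cls[of e 85 k] by auto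
        then show ?thesis using 2 True mod85_17[of e] by auto
      qed
    qed
  next
    case False
    show ?thesis
    proof (rule ex1I[of _ "cls 85 (e mod 85)"])
      show "cls 85 (e mod 85) \<in> FamI i \<and> n \<in> cls 85 (e mod 85)"
        unfolding FamI_def using False m85 e mem_cls[of e 85 "e mod 85"] mod85_17[of e] by auto
      fix A assume A: "A \<in> FamI i \<and> n \<in> A"
      then consider j where "j \<in> {i..<17}" "A = cls 17 j" | k where "k < 85" "k mod 17 < i" "A = cls 85 k"
        unfolding FamI_def by auto
      then show "A = cls 85 (e mod 85)"
      proof cases
        case 1
        then have "e mod 17 = j" using A e mem_cls[of e 17 j] by auto
        then show ?thesis using 1 False by auto
      next
        case 2
        then show ?thesis using A e mem_cls[of e 85 k] by auto
      qed
    qed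
  qed
  qed
qed

lemma npart_FamW: "npart FamW"
  unfolding npart_def
proof (rule conjI)
  show "\<forall>A\<in>FamW. xcl A \<and> A \<subseteq> {..<256} \<and> card A \<noteq> 1"
  proof
    fix A assume "A \<in> FamW"
    then have "A = Wn \<or> (\<exists>k<85. A = cls 85 k)" unfolding FamW_def by auto
    then show "xcl A \<and> A \<subseteq> {..<256} \<and> card A \<noteq> 1" using good_cls85 xcl_Wn Wn_sub Wn_card by auto
  qed
next
  show "\<forall>n. 0 < n \<longrightarrow> n < 256 \<longrightarrow> (\<exists>!A. A \<in> FamW \<and> n \<in> A)"
  proof (intro allI impI)
  fix n :: nat assume n: "0 < n" "n < 256"
  then obtain e where e: "e < 255" "pw e = n" using pw_surj[of n] by auto
  have m85: "e mod 85 < 85" by simp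
  have d: "pw e \<in> Wn \<longleftrightarrow> pw (e mod 85) \<in> Wn" by (rule Wn_dich[OF e(1)])
  show "\<exists>!A. A \<in> FamW \<and> n \<in> A"
  proof (cases "n \<in> Wn")
    case True
    show ?thesis
    proof (rule ex1I[of _ Wn])
      show "Wn \<in> FamW \<and> n \<in> Wn" using True unfolding FamW_def by simp
      fix A assume A: "A \<in> FamW \<and> n \<in> A"
      show "A = Wn"
      proof (rule ccontr)
        assume "A \<noteq> Wn"
        then obtain k where k: "k < 85" "pw k \<notin> Wn" "A = cls 85 k" using A unfolding FamW_def by auto
        then have "e mod 85 = k" using A e mem_cls[of e 85 k] by auto
        then show False using k d True e by auto
      qed
    qed
  next
    case False
    show ?thesis
    proof (rule ex1I[of _ "cls 85 (e mod 85)"])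
      show "cls 85 (e mod 85) \<in> FamW \<and> n \<in> cls 85 (e mod 85)"
        unfolding FamW_def using False m85 e d mem_cls[of e 85 "e mod 85"] by auto
      fix A assume A: "A \<in> FamW \<and> n \<in> A"
      then have "A \<noteq> Wn" using False by auto
      then obtain k where k: "k < 85" "A = cls 85 k" using A unfolding FamW_def by auto
      then show "A = cls 85 (e mod 85)" using A e mem_cls[of e 85 k] by auto
    qed
  qed
  qed
qed



section \<open>The F_2^8 side\<close>

lemma bit_cases2: "(c::bit) = 0 \<or> c = 1"
  by (cases c) auto

lemma UNIV_bit2: "(UNIV :: bit set) = {0, 1}"
  using bit_cases2 by auto

lemma CARD_bit: "CARD(bit) = 2"
  by (simp add: UNIV_bit2)

lemma CARD_F28: "CARD(F28) = 256"
  by (simp add: CARD_bit)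

lemma finite_UNIV_F28: "finite (UNIV :: F28 set)"
proof (subst bij_betw_finite)
  show "bij_betw vec_nth UNIV (Pi (UNIV :: 8 set) (\<lambda>_. UNIV :: bit set))"
    by (intro bij_betwI[of _ _ _ vec_lambda]) (auto simp: vec_eq_iff)
  have fb: "finite (UNIV :: bit set)" by (simp add: UNIV_bit2)
  have "finite (PiE (UNIV :: 8 set) (\<lambda>_. UNIV :: bit set))"
    by (rule finite_PiE) (simp_all add: fb)
  also have "(PiE (UNIV :: 8 set) (\<lambda>_. UNIV :: bit set)) = Pi UNIV (\<lambda>_. UNIV)"
    by auto
  finally show "finite (Pi (UNIV :: 8 set) (\<lambda>_. UNIV :: bit set))" .
qed

lemma finite_F28_sets[simp]: "finite (S :: F28 set)"
  by (rule finite_subset[OF _ finite_UNIV_F28]) simp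

lemma finite_F28_setsets[simp]: "finite (P :: F28 set set)"
proof (rule finite_subset[of P "Pow UNIV"])
  show "finite (Pow (UNIV :: F28 set))" using finite_UNIV_F28 by (simp only: finite_Pow_iff)
qed simp

lemma card_span_indep:
  fixes B :: "F28 set"
  assumes "finite B" "vec.independent B"
  shows "card (vec.span B) = 2 ^ card B"
  using assms
proof (induction B rule: finite_induct)
  case empty
  then show ?case by simp
next
  case (insert b B)
  have indB: "vec.independent B" and bnot: "b \<notin> vec.span B"
    using insert.prems insert.hyps(2) by (simp_all add: vec.independent_insert)
  have IH: "card (vec.span B) = 2 ^ card B" using insert.IH indB by simp
  have span_eq: "vec.span (insert b B) = vec.span B \<union> (\<lambda>x. b + x) ` vec.span B"
  proof (intro set_eqI iffI)
    fix x assume "x \<in> vec.span (insert b B)"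
    then obtain k where k: "x - k *s b \<in> vec.span B" unfolding vec.span_insert by auto
    show "x \<in> vec.span B \<union> (\<lambda>x. b + x) ` vec.span B"
    proof (cases "k = 0")
      case True
      then show ?thesis using k by simp
    next
      case False
      then have "k = 1" using bit_cases2 by blast
      then have "x = b + (x - 1 *s b)" "x - 1 *s b \<in> vec.span B" using k by simp_all
      then show ?thesis by blast
    qed
  next
    fix x assume "x \<in> vec.span B \<union> (\<lambda>x. b + x) ` vec.span B"
    then consider "x \<in> vec.span B" | y where "y \<in> vec.span B" "x = b + y" by blast
    then show "x \<in> vec.span (insert b B)"
    proof cases
      case 1
      then have "x - 0 *s b \<in> vec.span B" by simp
      then show ?thesis unfolding vec.span_insert by blast
    next
      case 2
      then have "x - 1 *s b \<in> vec.span B" by simp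
      then show ?thesis unfolding vec.span_insert by blast
    qed
  qed
  have disj: "vec.span B \<inter> (\<lambda>x. b + x) ` vec.span B = {}"
  proof (rule ccontr)
    assume "vec.span B \<inter> (\<lambda>x. b + x) ` vec.span B \<noteq> {}"
    then obtain y where y: "y \<in> vec.span B" "b + y \<in> vec.span B" by auto
    then have "(b + y) - y \<in> vec.span B" by (rule_tac vec.span_diff) auto
    then show False using bnot by simp
  qed
  have c2: "card ((\<lambda>x. b + x) ` vec.span B) = card (vec.span B)"
    by (rule card_image) (simp add: inj_on_def)
  have "card (vec.span (insert b B)) = card (vec.span B) + card ((\<lambda>x. b + x) ` vec.span B)"
    unfolding span_eq by (rule card_Un_disjoint) (simp_all add: disj)
  then show ?case using IH c2 insert.hyps by simp
qed

lemma card_subspace: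
  fixes V :: "F28 set"
  assumes "vec.subspace V"
  shows "card V = 2 ^ vec.dim V"
proof -
  obtain B where B: "B \<subseteq> V" "vec.independent B" "V \<subseteq> vec.span B" "card B = vec.dim V"
    using vec.basis_exists by blast
  have "vec.span B = V" using B assms by (intro vec.span_subspace) auto
  moreover have "finite B" using B(1) by simp
  ultimately show ?thesis using card_span_indep[of B] B by simp
qed

lemma dim_from_card:
  fixes V :: "F28 set"
  assumes "vec.subspace V" "card V = 2 ^ d"
  shows "vec.dim V = d"
  using card_subspace[OF assms(1)] assms(2) by simp

lemma card_le_256: "card (V :: F28 set) \<le> 256"
  using card_mono[OF finite_UNIV_F28, of V] CARD_F28 by simp

section \<open>Classification\<close>

lemma vsp_basic:
  assumes P: "vector_space_partition P" and V: "V \<in> P"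
  shows "vec.subspace V" "card V = 2 ^ vec.dim V" "1 \<le> vec.dim V" "vec.dim V \<le> 8" "0 \<in> V"
proof -
  show sV: "vec.subspace V" using P V unfolding vector_space_partition_def by auto
  show cV: "card V = 2 ^ vec.dim V" by (rule card_subspace[OF sV])
  show z: "0 \<in> V" using sV by (simp add: vec.subspace_def)
  have "V \<noteq> {0}" using P V unfolding vector_space_partition_def by auto
  then obtain x where "x \<in> V" "x \<noteq> 0" using z by blast
  then have "card {0, x} \<le> card V" using z by (intro card_mono) auto
  then have "2 \<le> card V" using \<open>x \<noteq> 0\<close> by simp
  then show "1 \<le> vec.dim V" using cV by (cases "vec.dim V") auto
  have "(2::nat) ^ vec.dim V \<le> 2 ^ 8" using cV card_le_256[of V] by simp
  then show "vec.dim V \<le> 8" by (subst (asm) power_increasing_iff) simp_all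
qed

lemma vsp_inter:
  assumes P: "vector_space_partition P" and U: "U \<in> P" and W: "W \<in> P" and ne: "U \<noteq> W"
  shows "U \<inter> W = {0}"
proof -
  have "0 \<in> U" "0 \<in> W" by (rule vsp_basic(5)[OF P U], rule vsp_basic(5)[OF P W])
  moreover have "x = 0" if "x \<in> U" "x \<in> W" for x
  proof (rule ccontr)
    assume "x \<noteq> 0"
    then have "\<exists>!V. V \<in> P \<and> x \<in> V" using P unfolding vector_space_partition_def by blast
    then show False using that U W ne by blast
  qed
  ultimately show ?thesis by blast
qed

lemma vsp_dim_sum:
  assumes P: "vector_space_partition P" and U: "U \<in> P" and W: "W \<in> P" and ne: "U \<noteq> W"
  shows "vec.dim U + vec.dim W \<le> 8"
proof -
  have sU: "vec.subspace U" by (rule vsp_basic(1)[OF P U])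
  have sW: "vec.subspace W" by (rule vsp_basic(1)[OF P W])
  have int: "U \<inter> W = {0}" by (rule vsp_inter[OF P U W ne])
  have inj: "inj_on (\<lambda>(u, w). u + w) (U \<times> W)"
  proof (rule inj_onI, clarsimp)
    fix u w u' w' assume h: "u \<in> U" "w \<in> W" "u' \<in> U" "w' \<in> W" "u + w = u' + w'"
    have "u - u' = (u + w) - (u' + w)" by (simp only: add_diff_cancel_right)
    also have "\<dots> = (u' + w') - (u' + w)" by (simp only: h(5))
    also have "\<dots> = w' - w" by (simp only: add_diff_cancel_left)
    finally have eq: "u - u' = w' - w" .
    have "u - u' \<in> U" using vec.subspace_diff[OF sU h(1) h(3)] .
    moreover have "u - u' \<in> W" unfolding eq using vec.subspace_diff[OF sW h(4) h(2)] .
    ultimately have "u - u' \<in> U \<inter> W" by (rule IntI)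
    then have "u - u' = 0" unfolding int by simp
    then have "u = u'" by simp
    moreover have "w' - w = 0" using \<open>u - u' = 0\<close> eq by simp
    then have "w = w'" by simp
    ultimately show "u = u' \<and> w = w'" by (rule conjI)
  qed
  have "card U * card W = card ((\<lambda>(u, w). u + w) ` (U \<times> W))"
    using card_image[OF inj] by (simp add: card_cartesian_product)
  also have "\<dots> \<le> 256" by (rule card_le_256)
  finally have "(2::nat) ^ (vec.dim U + vec.dim W) \<le> 2 ^ 8"
    using vsp_basic(2)[OF P U] vsp_basic(2)[OF P W] by (simp add: power_add)
  then show ?thesis by (subst (asm) power_increasing_iff) simp_all
qed

lemma vsp_count:
  assumes P: "vector_space_partition P"
  shows "(\<Sum>V\<in>P. (2 ^ vec.dim V - 1)) = (255::nat)"
proof -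
  have fin: "finite P" by simp
  have un: "(\<Union>V\<in>P. V - {0}) = UNIV - {0}"
  proof (intro set_eqI iffI)
    fix x :: F28 assume "x \<in> UNIV - {0}"
    then obtain V where "V \<in> P" "x \<in> V" using P unfolding vector_space_partition_def by blast
    then show "x \<in> (\<Union>V\<in>P. V - {0})" using \<open>x \<in> UNIV - {0}\<close> by blast
  qed auto
  have "card (\<Union>V\<in>P. V - {0}) = (\<Sum>V\<in>P. card (V - {0}))"
  proof (rule card_UN_disjoint)
    show "\<forall>i\<in>P. \<forall>j\<in>P. i \<noteq> j \<longrightarrow> (i - {0}) \<inter> (j - {0}) = {}"
      using vsp_inter[OF P] by blast
  qed simp_all
  also have "\<dots> = (\<Sum>V\<in>P. (2 ^ vec.dim V - 1))"
  proof (rule sum.cong)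
    fix V assume "V \<in> P"
    then show "card (V - {0}) = 2 ^ vec.dim V - 1" using vsp_basic[OF P] by simp
  qed simp
  finally show ?thesis unfolding un using CARD_F28 by simp
qed

lemma num_dim_zero:
  assumes "\<forall>V\<in>P. vec.dim V \<noteq> d"
  shows "num_dim P d = 0"
proof -
  have "{V\<in>P. vec.dim V = d} = {}" using assms by auto
  then show ?thesis unfolding num_dim_def by (simp only: card.empty)
qed

lemma has_typeI:
  assumes "\<And>d. d \<notin> {2,4,6,8} \<Longrightarrow> num_dim P d = 0" "\<And>d. d \<notin> {2,4,6,8} \<Longrightarrow> t d = 0"
    "num_dim P 2 = t 2" "num_dim P 4 = t 4" "num_dim P 6 = t 6" "num_dim P 8 = t 8"
  shows "has_type P t"
  unfolding has_type_def
proof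
  fix d :: nat
  show "num_dim P d = t d"
  proof (cases "d \<in> {2,4,6,8}")
    case True
    then have "d = 2 \<or> d = 4 \<or> d = 6 \<or> d = 8" by simp
    then show ?thesis using assms(3-6) by (elim disjE) simp_all
  next
    case False
    then show ?thesis using assms(1,2) by simp
  qed
qed

lemma classify:
  assumes P: "vector_space_partition P" and ev: "\<forall>V\<in>P. even (vec.dim V)"
  shows "has_type P type_8 \<or> has_type P type_2_64_6_1 \<or> (\<exists>i\<le>17. has_type P (type_2_4 i))"
proof -
  have fin: "finite P" by simp
  have dims: "vec.dim V \<in> {2,4,6,8}" if "V \<in> P" for V
  proof -
    obtain k where k: "k = vec.dim V" by simp
    have "1 \<le> k" "k \<le> 8" "even k" using vsp_basic[OF P that] ev that k by auto
    then have "k = 2 \<or> k = 4 \<or> k = 6 \<or> k = 8" by presburger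
    then show ?thesis using k by auto
  qed
  have other: "num_dim P d = 0" if "d \<notin> {2,4,6,8}" for d
  proof (rule num_dim_zero, rule ballI)
    fix V assume "V \<in> P"
    then have "vec.dim V \<in> {2,4,6,8}" by (rule dims)
    then show "vec.dim V \<noteq> d" using that by auto
  qed
  define n where "n d = num_dim P d" for d
  have "(\<Sum>V\<in>P. (2 ^ vec.dim V - 1)) = (\<Sum>d\<in>{2,4,6,8}. sum (\<lambda>V. 2 ^ vec.dim V - 1) {V\<in>P. vec.dim V = d})"
    by (rule sum.group[symmetric]) (use dims in auto)
  also have "\<dots> = (\<Sum>d\<in>{2,4,6,8::nat}. n d * (2 ^ d - 1))"
  proof (rule sum.cong)
    fix d :: nat
    have "sum (\<lambda>V. 2 ^ vec.dim V - 1) {V\<in>P. vec.dim V = d} = sum (\<lambda>V. 2 ^ d - 1) {V\<in>P. vec.dim V = d}"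
      by (rule sum.cong) auto
    then show "sum (\<lambda>V. 2 ^ vec.dim V - 1) {V\<in>P. vec.dim V = d} = n d * (2 ^ d - 1)"
      by (simp add: n_def num_dim_def)
  qed simp
  finally have eq: "n 2 * 3 + n 4 * 15 + n 6 * 63 + n 8 * 255 = 255"
    using vsp_count[OF P] by simp
  have uniq6: "vec.dim V \<le> 2" if "U \<in> P" "vec.dim U = 6" "V \<in> P" "V \<noteq> U" for U V
    using vsp_dim_sum[OF P that(3) that(1) that(4)] that(2) by simp
  show ?thesis
  proof (cases "n 8 = 0")
    case False
    then have "n 8 = 1" "n 2 = 0" "n 4 = 0" "n 6 = 0" using eq by auto
    then have "has_type P type_8"
      by (intro has_typeI other) (simp_all add: type_8_def n_def)
    then show ?thesis by simp
  next
    case n8: True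
    show ?thesis
    proof (cases "n 6 = 0")
      case False
      then have "{V\<in>P. vec.dim V = 6} \<noteq> {}" unfolding n_def num_dim_def by (metis card.empty)
      then obtain U where U: "U \<in> P" "vec.dim U = 6" by auto
      have s6: "{V\<in>P. vec.dim V = 6} = {U}"
      proof (intro set_eqI iffI)
        fix V assume "V \<in> {V\<in>P. vec.dim V = 6}"
        then have V: "V \<in> P" "vec.dim V = 6" by auto
        show "V \<in> {U}"
        proof (rule ccontr)
          assume "V \<notin> {U}"
          then show False using uniq6[OF U V(1)] V(2) by simp
        qed
      qed (use U in simp)
      have s4: "{V\<in>P. vec.dim V = 4} = {}"
      proof (intro set_eqI iffI)
        fix V assume "V \<in> {V\<in>P. vec.dim V = 4}"
        then have V: "V \<in> P" "vec.dim V = 4" by auto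
        then have "V \<noteq> U" using U by auto
        then show "V \<in> {}" using uniq6[OF U V(1)] V(2) by simp
      qed simp
      have "n 6 = 1" "n 4 = 0" unfolding n_def num_dim_def using s6 s4 by simp_all
      then have "n 2 = 64" using eq n8 by simp
      then have "has_type P type_2_64_6_1"
        using n8 \<open>n 6 = 1\<close> \<open>n 4 = 0\<close>
        by (intro has_typeI other) (simp_all add: type_2_64_6_1_def n_def)
      then show ?thesis by simp
    next
      case n6: True
      have "n 2 * 3 + n 4 * 15 = 255" using eq n8 n6 by simp
      then have "n 4 \<le> 17" "n 2 = 5 * (17 - n 4)" by auto
      then have "has_type P (type_2_4 (17 - n 4))"
        using n8 n6
        by (intro has_typeI other) (simp_all add: type_2_4_def n_def)
      then show ?thesis by (intro disjI2 exI[of _ "17 - n 4"]) simp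
    qed
  qed
qed



section \<open>Transport from nat codes to F_2^8\<close>

definition idx :: "8 \<Rightarrow> nat" where
  "idx = (SOME h. bij_betw h (UNIV :: 8 set) {0..<(8::nat)})"

lemma idx_bij: "bij_betw idx (UNIV :: 8 set) {0..<(8::nat)}"
proof -
  have "\<exists>h. bij_betw h (UNIV :: 8 set) {0..<card (UNIV :: 8 set)}"
    by (rule ex_bij_betw_finite_nat) simp
  then have "\<exists>h. bij_betw h (UNIV :: 8 set) {0..<(8::nat)}" by simp
  then show ?thesis unfolding idx_def by (rule someI_ex)
qed

definition enc :: "nat \<Rightarrow> F28" where
  "enc n = (\<chi> i. if bit n (idx i) then 1 else 0)"

lemma enc_xor: "enc (xor x y) = enc x + enc y"
  unfolding enc_def by (auto simp: vec_eq_iff bit_xor_iff)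

lemma enc_0: "enc 0 = 0"
  unfolding enc_def by (simp add: vec_eq_iff)

lemma enc_bit_eq:
  assumes "enc x = enc y"
  shows "bit x (idx i) = bit y (idx i)"
proof -
  have "enc x $ i = enc y $ i" using assms by simp
  then show ?thesis unfolding enc_def by (auto split: if_splits)
qed

lemma high_bit_nat: "(x::nat) < 256 \<Longrightarrow> 8 \<le> k \<Longrightarrow> \<not> bit x k"
proof -
  assume "x < 256" "8 \<le> k"
  then have "take_bit 8 x = x" by (simp add: take_bit_nat_eq_self_iff)
  then have "bit x k = bit (take_bit 8 x) k" by simp
  then show ?thesis using \<open>8 \<le> k\<close> by (simp add: bit_take_bit_iff)
qed

lemma enc_inj: "inj_on enc {..<256}"
proof (rule inj_onI)
  fix x y assume x: "x \<in> {..<256}" and y: "y \<in> {..<256}" and eq: "enc x = enc y"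
  show "x = y"
  proof (rule bit_eqI)
    fix k
    show "bit x k = bit y k"
    proof (cases "k < 8")
      case True
      then have "k \<in> idx ` UNIV" using idx_bij by (simp add: bij_betw_def)
      then obtain i where "k = idx i" by blast
      then show ?thesis using enc_bit_eq[OF eq] by simp
    next
      case False
      then show ?thesis using high_bit_nat x y by auto
    qed
  qed
qed

lemma enc_surj: "enc ` {..<256} = UNIV"
proof (rule card_eq_UNIV_imp_eq_UNIV)
  show "finite (UNIV :: F28 set)" by (rule finite_UNIV_F28)
  show "card (enc ` {..<256}) = CARD(F28)"
    using card_image[OF enc_inj] CARD_F28 by simp
qed

lemma enc_subspace: "xcl A \<Longrightarrow> vec.subspace (enc ` A)"
  unfolding vec.subspace_def xcl_def
proof (intro conjI ballI allI)
  assume A: "0 \<in> A \<and> (\<forall>x\<in>A. \<forall>y\<in>A. xor x y \<in> A)"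
  show "0 \<in> enc ` A" using A enc_0 by (metis image_eqI)
  fix x y assume "x \<in> enc ` A" "y \<in> enc ` A"
  then obtain a b where "a \<in> A" "b \<in> A" "x = enc a" "y = enc b" by auto
  then show "x + y \<in> enc ` A" using A enc_xor by (metis image_eqI)
next
  assume A: "0 \<in> A \<and> (\<forall>x\<in>A. \<forall>y\<in>A. xor x y \<in> A)"
  fix c :: bit and x assume x: "x \<in> enc ` A"
  show "c *s x \<in> enc ` A"
  proof (cases "c = 0")
    case True
    then have "c *s x = enc 0" by (simp add: enc_0)
    then show ?thesis using A by (metis image_eqI)
  next
    case False
    then have "c = 1" using bit_cases2 by blast
    then show ?thesis using x by simp
  qed
qed

lemma enc_card: "A \<subseteq> {..<256} \<Longrightarrow> card (enc ` A) = card A"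
  by (rule card_image) (rule inj_on_subset[OF enc_inj])

lemma enc_img_eq: "A \<subseteq> {..<256} \<Longrightarrow> B \<subseteq> {..<256} \<Longrightarrow> enc ` A = enc ` B \<longleftrightarrow> A = B"
  by (rule inj_on_image_eq_iff[OF enc_inj])

lemma enc_dim: "A \<subseteq> {..<256} \<Longrightarrow> xcl A \<Longrightarrow> card A = 2 ^ d \<Longrightarrow> vec.dim (enc ` A) = d"
  using dim_from_card[OF enc_subspace] enc_card by simp

lemma npart_vsp:
  assumes F: "npart F"
  shows "vector_space_partition ((`) enc ` F)"
  unfolding vector_space_partition_def
proof (intro conjI ballI allI impI)
  fix V assume "V \<in> (`) enc ` F"
  then obtain A where A: "A \<in> F" "V = enc ` A" by auto
  have g: "xcl A" "A \<subseteq> {..<256}" "card A \<noteq> 1" using F A unfolding npart_def by auto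
  show "vec.subspace V" using A g enc_subspace by simp
  show "V \<noteq> {0}"
  proof
    assume "V = {0}"
    then have "card (enc ` A) = 1" using A by simp
    then show False using enc_card[OF g(2)] g(3) by simp
  qed
next
  fix v :: F28 assume v: "v \<noteq> 0"
  have "v \<in> enc ` {..<256}" using enc_surj by simp
  then obtain n where n: "n < 256" "v = enc n" by auto
  have "n \<noteq> 0"
  proof
    assume "n = 0"
    then show False using v n enc_0 by simp
  qed
  then have "0 < n" by simp
  then have "\<exists>!A. A \<in> F \<and> n \<in> A" using F n unfolding npart_def by auto
  then obtain A where A: "A \<in> F" "n \<in> A" and uq: "\<And>B. B \<in> F \<Longrightarrow> n \<in> B \<Longrightarrow> B = A" by metis
  show "\<exists>!V. V \<in> (`) enc ` F \<and> v \<in> V"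
  proof (rule ex1I[of _ "enc ` A"])
    show "enc ` A \<in> (`) enc ` F \<and> v \<in> enc ` A" using A n by auto
    fix V assume V: "V \<in> (`) enc ` F \<and> v \<in> V"
    then obtain B where B: "B \<in> F" "V = enc ` B" by auto
    then obtain m where m: "m \<in> B" "v = enc m" using V by auto
    have "B \<subseteq> {..<256}" using F B unfolding npart_def by auto
    then have "m = n" using inj_onD[OF enc_inj, of m n] m n by auto
    then show "V = enc ` A" using uq[OF B(1)] m B by simp
  qed
qed

lemma has_type_num: "has_type P t \<Longrightarrow> num_dim P d = t d"
  unfolding has_type_def by simp

lemma num_dim_pos: "V \<in> P \<Longrightarrow> vec.dim V = d \<Longrightarrow> num_dim P d \<noteq> 0"
  unfolding num_dim_def by auto

lemma exists_8: "\<exists>P. vector_space_partition P \<and> has_type P type_8"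
proof -
  define P :: "F28 set set" where "P = {UNIV}"
  have cU: "card (UNIV :: F28 set) = 2 ^ 8" using CARD_F28 by simp
  have dU: "vec.dim (UNIV :: F28 set) = 8" by (rule dim_from_card[OF vec.subspace_UNIV cU])
  have vsp: "vector_space_partition P"
    unfolding vector_space_partition_def P_def
  proof (intro conjI ballI allI impI)
    fix V assume "V \<in> {UNIV :: F28 set}"
    then have V: "V = UNIV" by simp
    show "vec.subspace V" using V vec.subspace_UNIV by simp
    show "V \<noteq> {0}"
    proof
      assume "V = {0}"
      then have "card V = 1" by simp
      moreover have "card V = 256" using V CARD_F28 by simp
      ultimately show False by simp
    qed
  next
    fix v :: F28 assume "v \<noteq> 0"
    show "\<exists>!V. V \<in> {UNIV} \<and> v \<in> V" by auto
  qed
  have ev: "\<forall>V\<in>P. even (vec.dim V)" using dU by (simp add: P_def)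
  have n8: "num_dim P 8 \<noteq> 0" using num_dim_pos[of UNIV P 8] dU by (simp add: P_def)
  have "has_type P type_8 \<or> has_type P type_2_64_6_1 \<or> (\<exists>i\<le>17. has_type P (type_2_4 i))"
    by (rule classify[OF vsp ev])
  then have "has_type P type_8"
    using n8 has_type_num[of P _ 8] by (auto simp: type_2_64_6_1_def type_2_4_def)
  then show ?thesis using vsp by blast
qed

lemma dimW: "vec.dim (enc ` Wn) = 6"
  by (rule enc_dim[OF Wn_sub xcl_Wn]) (simp add: Wn_card)

lemma dim85: "k < 85 \<Longrightarrow> vec.dim (enc ` cls 85 k) = 2"
  by (rule enc_dim[OF cls_sub xcl_cls[OF _ zech85]]) (simp_all add: card_cls85)

lemma dim17: "j < 17 \<Longrightarrow> vec.dim (enc ` cls 17 j) = 4"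
  by (rule enc_dim[OF cls_sub xcl_cls[OF _ zech17]]) (simp_all add: card_cls17)

lemma exists_6: "\<exists>P. vector_space_partition P \<and> has_type P type_2_64_6_1"
proof -
  define P where "P = (`) enc ` FamW"
  have vsp: "vector_space_partition P" unfolding P_def by (rule npart_vsp[OF npart_FamW])
  have ev: "\<forall>V\<in>P. even (vec.dim V)"
  proof
    fix V assume "V \<in> P"
    then have "V = enc ` Wn \<or> (\<exists>k<85. V = enc ` cls 85 k)" unfolding P_def FamW_def by auto
    then show "even (vec.dim V)" using dimW dim85 by auto
  qed
  have "enc ` Wn \<in> P" unfolding P_def FamW_def by simp
  then have n6: "num_dim P 6 \<noteq> 0" using num_dim_pos dimW by metis
  have "has_type P type_8 \<or> has_type P type_2_64_6_1 \<or> (\<exists>i\<le>17. has_type P (type_2_4 i))"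
    by (rule classify[OF vsp ev])
  then have "has_type P type_2_64_6_1"
    using n6 has_type_num[of P _ 6] by (auto simp: type_8_def type_2_4_def)
  then show ?thesis using vsp by blast
qed

lemma exists_4:
  assumes i: "i \<le> 17"
  shows "\<exists>P. vector_space_partition P \<and> has_type P (type_2_4 i)"
proof -
  define P where "P = (`) enc ` FamI i"
  have vsp: "vector_space_partition P" unfolding P_def by (rule npart_vsp[OF npart_FamI])
  have dims: "vec.dim V = 4 \<and> (\<exists>j\<in>{i..<17}. V = enc ` cls 17 j) \<or> vec.dim V = 2" if "V \<in> P" for V
  proof -
    have "(\<exists>j\<in>{i..<17}. V = enc ` cls 17 j) \<or> (\<exists>k<85. V = enc ` cls 85 k)"
      using that unfolding P_def FamI_def by auto
    then show ?thesis using dim17 dim85 by auto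
  qed
  have ev: "\<forall>V\<in>P. even (vec.dim V)"
  proof
    fix V assume "V \<in> P"
    then show "even (vec.dim V)" using dims by fastforce
  qed
  have n8: "num_dim P 8 = 0"
  proof (rule num_dim_zero, rule ballI)
    fix V assume "V \<in> P"
    then show "vec.dim V \<noteq> 8" using dims[of V] by auto
  qed
  have n6: "num_dim P 6 = 0"
  proof (rule num_dim_zero, rule ballI)
    fix V assume "V \<in> P"
    then show "vec.dim V \<noteq> 6" using dims[of V] by auto
  qed
  have s4: "{V\<in>P. vec.dim V = 4} = (\<lambda>j. enc ` cls 17 j) ` {i..<17}"
  proof (intro set_eqI iffI)
    fix V assume "V \<in> {V\<in>P. vec.dim V = 4}"
    then show "V \<in> (\<lambda>j. enc ` cls 17 j) ` {i..<17}" using dims by fastforce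
  next
    fix V assume "V \<in> (\<lambda>j. enc ` cls 17 j) ` {i..<17}"
    then obtain j where j: "j \<in> {i..<17}" "V = enc ` cls 17 j" by auto
    then have "V \<in> P" unfolding P_def FamI_def by auto
    moreover have "vec.dim V = 4" using j dim17 by auto
    ultimately show "V \<in> {V\<in>P. vec.dim V = 4}" by simp
  qed
  have inj: "inj_on (\<lambda>j. enc ` cls 17 j) {i..<17}"
  proof (rule inj_onI)
    fix j j' assume j: "j \<in> {i..<17}" and j': "j' \<in> {i..<17}"
      and eq: "enc ` cls 17 j = enc ` cls 17 j'"
    then have "cls 17 j = cls 17 j'" using enc_img_eq[OF cls_sub cls_sub] by simp
    moreover have "pw j \<in> cls 17 j" using j mem_cls[of j 17 j] by simp
    ultimately have "pw j \<in> cls 17 j'" by simp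
    then have "j mod 17 = j'" using j mem_cls[of j 17 j'] by simp
    then show "j = j'" using j by simp
  qed
  have n4: "num_dim P 4 = 17 - i"
    unfolding num_dim_def s4 using card_image[OF inj] by simp
  have "has_type P type_8 \<or> has_type P type_2_64_6_1 \<or> (\<exists>i\<le>17. has_type P (type_2_4 i))"
    by (rule classify[OF vsp ev])
  moreover have "\<not> has_type P type_8"
  proof
    assume h: "has_type P type_8"
    have "num_dim P 8 = 1" using has_type_num[OF h, of 8] by (simp add: type_8_def)
    then show False using n8 by simp
  qed
  moreover have "\<not> has_type P type_2_64_6_1"
  proof
    assume h: "has_type P type_2_64_6_1"
    have "num_dim P 6 = 1" using has_type_num[OF h, of 6] by (simp add: type_2_64_6_1_def)
    then show False using n6 by simp
  qed
  ultimately obtain i' where i': "i' \<le> 17" "has_type P (type_2_4 i')" by blast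
  then have "17 - i' = 17 - i" using n4 has_type_num[of P "type_2_4 i'" 4] by (simp add: type_2_4_def)
  then have "i' = i" using i i' by simp
  then show ?thesis using i' vsp by blast
qed

theorem mainTheorem10:
  shows "(\<forall>P. vector_space_partition P \<and> (\<forall>V\<in>P. even (vec.dim V)) \<longrightarrow>
            has_type P type_8 \<or> has_type P type_2_64_6_1 \<or>
            (\<exists>i\<le>17. has_type P (type_2_4 i))) \<and>
         (\<exists>P. vector_space_partition P \<and> has_type P type_8) \<and>
         (\<exists>P. vector_space_partition P \<and> has_type P type_2_64_6_1) \<and>
         (\<forall>i\<le>17. \<exists>P. vector_space_partition P \<and> has_type P (type_2_4 i))"
proof (intro conjI allI impI)
  fix P assume "vector_space_partition P \<and> (\<forall>V\<in>P. even (vec.dim V))"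
  then show "has_type P type_8 \<or> has_type P type_2_64_6_1 \<or> (\<exists>i\<le>17. has_type P (type_2_4 i))"
    using classify by blast
next
  show "\<exists>P. vector_space_partition P \<and> has_type P type_8" by (rule exists_8)
next
  show "\<exists>P. vector_space_partition P \<and> has_type P type_2_64_6_1" by (rule exists_6)
next
  fix i :: nat assume "i \<le> 17"
  then show "\<exists>P. vector_space_partition P \<and> has_type P (type_2_4 i)" by (rule exists_4)
qed


end
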